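(* Let $n \geq k \geq 1$ and let $Z_1,\ldots,Z_k$ be subsets of $[n]$ with $|Z_i| = k-1$ for every $i\in[k]$. Let $\alpha_1,\ldots,\alpha_n$ be indeterminates and, for $i\in[k]$, let $f_i(x)=\prod_{j\in Z_i}(x-\alpha_j)=\sum_{j=1}^{k} a_{i,j}x^{j-1}$, where each $a_{i,j}$ is a polynomial in $\alpha_1,\ldots,\alpha_n$ with integer coefficients. Let $\mathbf{A}=(a_{i,j})_{i,j\in[k]}$ and \[ F(\alpha_1,\ldots,\alpha_n)=\det(\mathbf{A})\prod_{1\le j<i\le n}(\alpha_i-\alpha_j). \] Then for every $t\in[n]$, the degree of $F$ in the variable $\alpha_t$ is at most $n+k-2$.
   Context: $[n]=\{1,\ldots,n\}$. *)

theory Defs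
  imports "HOL-Library.Poly_Mapping" "HOL-Computational_Algebra.Polynomial" "Jordan_Normal_Form.Determinant"
begin

text \<open>Multivariate polynomials with integer coefficients in the indeterminates
  alpha_1, alpha_2, ... : finitely supported maps from monomials (exponent vectors
  nat =>0 nat) to integer coefficients.\<close>
type_synonym mpoly = "(nat \<Rightarrow>\<^sub>0 nat) \<Rightarrow>\<^sub>0 int"

definition Var :: "nat \<Rightarrow> mpoly" where
  "Var j = Poly_Mapping.single (Poly_Mapping.single j 1) 1"

text \<open>Degree of a multivariate polynomial in the variable alpha_t
  (degree of the zero polynomial taken to be 0).\<close>
definition degree_in :: "nat \<Rightarrow> mpoly \<Rightarrow> nat" where
  "degree_in t p = Max (insert 0 ((\<lambda>m. Poly_Mapping.lookup m t) ` Poly_Mapping.keys p))"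

end

theory Submission imports Defs begin

lemma deg_le_iff: "degree_in t p \<le> d \<longleftrightarrow> (\<forall>m\<in>Poly_Mapping.keys p. Poly_Mapping.lookup m t \<le> d)"
  unfolding degree_in_def by (simp add: Max_le_iff)

lemma deg_add: "degree_in t p \<le> d \<Longrightarrow> degree_in t q \<le> d \<Longrightarrow> degree_in t (p + q) \<le> d"
  unfolding deg_le_iff
proof (intro impI ballI)
  fix m assume p: "\<forall>m\<in>Poly_Mapping.keys p. Poly_Mapping.lookup m t \<le> d"
    and q: "\<forall>m\<in>Poly_Mapping.keys q. Poly_Mapping.lookup m t \<le> d"
    and m: "m \<in> Poly_Mapping.keys (p + q)"
  have "m \<in> Poly_Mapping.keys p \<or> m \<in> Poly_Mapping.keys q" using keys_add[of p q] m by auto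
  then show "Poly_Mapping.lookup m t \<le> d" using p q by auto
qed

lemma deg_uminus[simp]: "degree_in t (- p) = degree_in t p"
  unfolding degree_in_def by simp

lemma deg_zero[simp]: "degree_in t 0 = 0"
  unfolding degree_in_def by simp

lemma deg_one[simp]: "degree_in t 1 = 0"
  unfolding degree_in_def by simp

lemma deg_mult: "degree_in t p \<le> a \<Longrightarrow> degree_in t q \<le> b \<Longrightarrow> degree_in t (p * q) \<le> a + b"
  unfolding deg_le_iff
proof
  fix m assume p: "\<forall>m\<in>Poly_Mapping.keys p. Poly_Mapping.lookup m t \<le> a"
    and q: "\<forall>m\<in>Poly_Mapping.keys q. Poly_Mapping.lookup m t \<le> b"
    and m: "m \<in> Poly_Mapping.keys (p * q)"
  then obtain x y where "m = x + y" "x \<in> Poly_Mapping.keys p" "y \<in> Poly_Mapping.keys q"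
    using keys_mult by blast
  then show "Poly_Mapping.lookup m t \<le> a + b" using p q by (simp add: lookup_add add_mono)
qed

lemma deg_sum: "(\<And>i. i \<in> S \<Longrightarrow> degree_in t (g i) \<le> d) \<Longrightarrow> degree_in t (sum g S) \<le> d"
  by (induction S rule: infinite_finite_induct) (auto intro: deg_add)

lemma deg_prod: "(\<And>i. i \<in> S \<Longrightarrow> degree_in t (g i) \<le> d i) \<Longrightarrow> degree_in t (prod g S) \<le> sum d S"
  by (induction S rule: infinite_finite_induct) (auto intro: deg_mult)

lemma deg_Var: "degree_in t (Var j) \<le> (if j = t then 1 else 0)"
  unfolding deg_le_iff Var_def by (auto simp: lookup_single)

lemma deg_diff: "degree_in t p \<le> d \<Longrightarrow> degree_in t q \<le> d \<Longrightarrow> degree_in t (p - q) \<le> d"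
  using deg_add[of t p d "-q"] by simp

lemma deg_signof: "degree_in t (signof p * q) \<le> degree_in t q"
proof -
  have "(signof p :: mpoly) \<in> {1, -1}" by (rule signof_pm_one)
  hence "(signof p :: mpoly) = 1 \<or> (signof p :: mpoly) = -1" by blast
  hence "signof p * q = q \<or> signof p * q = - q" by (metis mult_1 mult_minus1)
  thus ?thesis by auto
qed

lemma coeff_bound:
  assumes "finite S"
  shows "degree_in t (coeff (\<Prod>j\<in>S. [:- Var j, 1:]) i) \<le> card (S \<inter> {t})"
  using assms
proof (induction S arbitrary: i rule: finite_induct)
  case empty
  then show ?case by (cases i) auto
next
  case (insert j S)
  let ?q = "\<Prod>j\<in>S. [:- Var j, 1:]"
  have e: "coeff ([:- Var j, 1:] * ?q) i = (- Var j) * coeff ?q i + (case i of 0 \<Rightarrow> 0 | Suc i' \<Rightarrow> coeff ?q i')"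
    by (simp add: mult_pCons_left coeff_pCons split: nat.splits)
  have c: "card (insert j S \<inter> {t}) = card (S \<inter> {t}) + (if j = t then 1 else 0)"
    using insert by auto
  have "degree_in t ((- Var j) * coeff ?q i) \<le> (if j = t then 1 else 0) + card (S \<inter> {t})"
    using deg_mult[OF _ insert.IH] deg_Var[of t j] by simp
  moreover have "degree_in t (case i of 0 \<Rightarrow> 0 | Suc i' \<Rightarrow> coeff ?q i') \<le> card (S \<inter> {t})"
    using insert.IH by (cases i) auto
  ultimately have d1: "degree_in t ((- Var j) * coeff ?q i) \<le> card (insert j S \<inter> {t})"
    and d2: "degree_in t (case i of 0 \<Rightarrow> 0 | Suc i' \<Rightarrow> coeff ?q i') \<le> card (insert j S \<inter> {t})"
    using c by linarith+
  show ?case unfolding prod.insert[OF insert(1,2)] e by (rule deg_add[OF d1 d2])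
qed

theorem lemma1:
  fixes n k :: nat and Z :: "nat \<Rightarrow> nat set"
    and f :: "nat \<Rightarrow> mpoly poly" and A :: "mpoly mat" and F :: mpoly
  assumes "1 \<le> k" and "k \<le> n"
    and "\<forall>i\<in>{1..k}. Z i \<subseteq> {1..n} \<and> card (Z i) = k - 1"
  defines "f \<equiv> \<lambda>i. \<Prod>j\<in>Z i. [:- Var j, 1:]"
    and "A \<equiv> mat k k (\<lambda>(i, j). coeff (f (i + 1)) j)"
    and "F \<equiv> det A * (\<Prod>i\<in>{1..n}. \<Prod>j\<in>{1..<i}. (Var i - Var j))"
  shows "\<forall>t\<in>{1..n}. degree_in t F \<le> n + k - 2"
proof -
  have Zfin: "\<And>i. i < k \<Longrightarrow> finite (Z (i+1))" using assms(3) finite_subset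
    by (metis Suc_eq_plus1 Suc_leI atLeastAtMost_iff finite_atLeastAtMost le_add2)
  have Zcard: "\<And>i. i < k \<Longrightarrow> card (Z (i+1)) = k - 1" using assms(3) by auto
  have Acar: "A \<in> carrier_mat k k" unfolding A_def by simp
  have Aij: "\<And>i j. i<k \<Longrightarrow> j<k \<Longrightarrow> A $$ (i,j) = coeff (f (i+1)) j" by (simp add: A_def)
  show ?thesis
  proof
    fix t assume t: "t \<in> {1..n}"
    define V where "V = (\<Prod>i\<in>{1..n}. \<Prod>j\<in>{1..<i}. (Var i - Var j))"
    have "degree_in t V \<le> (\<Sum>i\<in>{1..n}. \<Sum>j\<in>{1..<i}. ((if i = t then 1 else 0) + (if j = t then 1 else 0)))"
      unfolding V_def
      by (intro deg_prod deg_diff; rule order_trans[OF deg_Var]; simp)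
    also have "\<dots> = (\<Sum>i\<in>{1..n}. (if i = t then i - 1 else 0) + (if t < i then 1 else 0))"
      using t by (intro sum.cong) (auto simp: sum.distrib)
    also have "\<dots> = (t - 1) + card {t<..n}"
    proof -
      have e: "{Suc 0..n} \<inter> Collect ((<) t) = {t<..n}" using t by auto
      show ?thesis using t by (simp add: sum.distrib sum.If_cases e)
    qed
    also have "\<dots> = n - 1" using t by simp
    finally have Vb: "degree_in t V \<le> n - 1" .
    have D: "degree_in t (det A) \<le> k - 1"
    proof (cases "\<exists>i<k. t \<notin> Z (i+1)")
      case True
      then obtain i0 where i0: "i0<k" "t \<notin> Z(i0+1)" by blast
      have ent: "degree_in t (A $$ (i,j)) \<le> (if i = i0 then 0 else 1)" if ij: "i<k" "j<k" for i j
      proof -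
        have "degree_in t (A$$(i,j)) \<le> card (Z(i+1) \<inter> {t})"
          unfolding Aij[OF ij] f_def by (rule coeff_bound) (use Zfin ij in auto)
        moreover have "card (Z(i+1)\<inter>{t}) \<le> 1" using card_mono[of "{t}" "Z(i+1) \<inter> {t}"] by simp
        moreover have "i = i0 \<Longrightarrow> card (Z(i+1)\<inter>{t}) = 0" using i0 by auto
        ultimately show ?thesis by auto
      qed
      have "degree_in t (det A) \<le> (\<Sum>i\<in>{0..<k}. if i = i0 then 0 else 1)"
        unfolding det_def'[OF Acar]
      proof (intro deg_sum order_trans[OF deg_signof] deg_prod)
        fix p i assume p: "p \<in> {p. p permutes {0..<k}}" and i: "i \<in> {0..<k}"
        have "p i < k" using p i permutes_in_image by fastforce
        then show "degree_in t (A $$ (i, p i)) \<le> (if i = i0 then 0 else 1)" using ent i by auto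
      qed
      also have "\<dots> = card ({0..<k} - {i0})"
        by (simp add: sum.If_cases Diff_eq)
      also have "\<dots> = k - 1" using i0 by simp
      finally show ?thesis .
    next
      case False
      hence tZ: "\<And>i. i < k \<Longrightarrow> t \<in> Z (i+1)" by blast
      define M :: "mpoly mat" where "M = mat k k (\<lambda>(i,j). if j = 0 then Var t ^ i else if i = j then 1 else 0)"
      have Mcar: "M \<in> carrier_mat k k" unfolding M_def by simp
      have "det M = prod_list (diag_mat M)"
        by (rule det_lower_triangular[OF _ Mcar]) (simp add: M_def)
      also have "diag_mat M = replicate k 1"
        by (rule nth_equalityI) (auto simp: diag_mat_def M_def)
      also have "prod_list (replicate k (1::mpoly)) = 1" by simp
      finally have detM: "det M = 1" .
      have polyf: "poly (f (i+1)) x = (\<Sum>j<k. coeff (f (i+1)) j * x ^ j)" if i: "i < k" for i x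
      proof -
        have "degree (f (i+1)) \<le> (\<Sum>j\<in>Z (i+1). degree [:- Var j, (1::mpoly):])"
          unfolding f_def by (rule order_trans[OF degree_prod_sum_le[OF Zfin[OF i]]]) simp
        also have "\<dots> = k - 1" using Zcard[OF i] by simp
        finally have dg: "degree (f (i+1)) < k" using assms(1) by linarith
        have "poly (f (i+1)) x = (\<Sum>j\<le>degree (f (i+1)). coeff (f (i+1)) j * x^j)" by (rule poly_altdef)
        also have "\<dots> = (\<Sum>j<k. coeff (f (i+1)) j * x^j)"
          by (rule sum.mono_neutral_left) (use dg in \<open>auto simp: coeff_eq_0\<close>)
        finally show ?thesis .
      qed
      have AM0: "(A*M) $$ (i,0) = 0" if i: "i<k" for i
      proof -
        have "(A*M) $$ (i,0) = (\<Sum>j\<in>{0..<k}. A $$ (i,j) * Var t ^ j)"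
          using i assms(1) Acar Mcar by (simp add: scalar_prod_def M_def)
        also have "\<dots> = (\<Sum>j<k. coeff (f (i+1)) j * Var t ^ j)"
          using i by (simp add: Aij atLeast0LessThan)
        also have "\<dots> = poly (f (i+1)) (Var t)" using polyf[OF i] by simp
        also have "\<dots> = 0" unfolding f_def poly_prod
          by (rule prod_zero) (use Zfin[OF i] tZ[OF i] in auto)
        finally show ?thesis .
      qed
      have AMcar: "A * M \<in> carrier_mat k k" using Acar Mcar by simp
      have "det (A * M) = 0"
        unfolding det_col[OF AMcar]
      proof (rule sum.neutral, intro ballI)
        fix p assume p: "p \<in> {p. p permutes {0..<k}}"
        have "p 0 < k" using p assms(1) permutes_in_image by fastforce
        hence "(\<Prod>j<k. (A * M) $$ (p j, j)) = 0"
          by (intro prod_zero) (use assms(1) AM0 in \<open>auto intro!: bexI[of _ 0]\<close>)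
        thus "signof p * (\<Prod>j<k. (A * M) $$ (p j, j)) = 0" by simp
      qed
      hence "det A = 0" using det_mult[OF Acar Mcar] detM by simp
      thus ?thesis by simp
    qed
    have "degree_in t F \<le> (k-1) + (n-1)" unfolding F_def V_def[symmetric] by (rule deg_mult[OF D Vb])
    thus "degree_in t F \<le> n + k - 2" using assms by linarith
  qed
qed

end
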